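(* Assume $p_{X,Y}\ne p_Xp_Y$ (where $p_{X,Y}=p_Xp_{Y|X}$). Let $(X_1,Y_1),(X_2,Y_2)$ be distributed according to $p_{X,Y}$ marginally, and define $p_0=\Pr(Y_1\ne Y_2)$ when $X_1,X_2$ are independent (each $Y_k$ drawn from $p_{Y|X}(\cdot\mid X_k)$ independently), and $p_1=\Pr(Y_1\neq Y_2)$ when $X_1=X_2$ (and $Y_1,Y_2$ are conditionally independent given $X_1$, each with law $p_{Y|X}(\cdot\mid X_1)$). Then $p_1<p_0$. Fix any $\tau$ with $p_1<\tau<p_0$ (not depending on $n$). Let $C_1^{m_n},\dots,C_K^{m_n}$ be the columns of $\mathbf{D}^{(2)}$, and consider the algorithm that, for each $j\in[K-1]$, declares $C_j^{m_n}$ and $C_{j+1}^{m_n}$ to be replicas (noisy copies of the same column of $\mathbf{D}^{(1)}$) if $d_H(C_j^{m_n},C_{j+1}^{m_n})<m_n\tau$ and declares them to come from different columns of $\mathbf{D}^{(1)}$ otherwise. Let $E_j$ be the event that this decision is wrong for the pair $(C_j^{m_n},C_{j+1}^{m_n})$. If $m_n$ grows exponentially in $n$ (i.e. the database growth rate $R=\lim_n \frac1n\log m_n$ satisfies $R>0$), then $$\Pr\Big(\bigcup_{j=1}^{K-1}E_j\Big)\to 0\quad\text{as } n\to\infty.$$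
   Context: $\mathbf{D}^{(1)}$ is an $m_n\times n$ matrix with i.i.d. entries from $p_X$ on a finite set $\mathfrak{X}$; $S^n$ has i.i.d. entries from $p_S$ on $\{0,\dots,s_{\max}\}$; $\boldsymbol{\Theta}_n$ is a uniform permutation of $[m_n]$, independent of everything else. $\mathbf{D}^{(2)}$ is obtained by replacing, in row $i$, the entry at column $j$ by the empty string if $S_j=0$ and by $S_j$ conditionally i.i.d. outputs of the channel $p_{Y|X}$ with input $D^{(1)}_{\boldsymbol{\Theta}_n^{-1}(i),j}$ if $S_j\ge1$ (all noise independent). Hence $\mathbf{D}^{(2)}$ has $K=\sum_j S_j$ columns, and two consecutive columns of $\mathbf{D}^{(2)}$ are replicas if they are noisy copies of the same column of $\mathbf{D}^{(1)}$. $d_H$ denotes Hamming distance between two columns of length $m_n$. *)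

theory Defs
  imports "HOL-Probability.Probability"
begin

definition joint_pmf :: "'x pmf \<Rightarrow> ('x \<Rightarrow> 'y pmf) \<Rightarrow> ('x \<times> 'y) pmf" where
  "joint_pmf pX pYX = do { x \<leftarrow> pX; y \<leftarrow> pYX x; return_pmf (x, y) }"

definition out_pmf :: "'x pmf \<Rightarrow> ('x \<Rightarrow> 'y pmf) \<Rightarrow> 'y pmf" where
  "out_pmf pX pYX = do { x \<leftarrow> pX; pYX x }"

definition p0 :: "'x pmf \<Rightarrow> ('x \<Rightarrow> 'y pmf) \<Rightarrow> real" where
  "p0 pX pYX = measure_pmf.prob
     (do { x1 \<leftarrow> pX; x2 \<leftarrow> pX; y1 \<leftarrow> pYX x1; y2 \<leftarrow> pYX x2; return_pmf (y1, y2) })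
     {(a, b). a \<noteq> b}"

definition p1 :: "'x pmf \<Rightarrow> ('x \<Rightarrow> 'y pmf) \<Rightarrow> real" where
  "p1 pX pYX = measure_pmf.prob
     (do { x \<leftarrow> pX; y1 \<leftarrow> pYX x; y2 \<leftarrow> pYX x; return_pmf (y1, y2) })
     {(a, b). a \<noteq> b}"

text \<open>D1 has iid p_X entries, S has iid p_S entries,
  Theta is a uniform permutation of the rows, and entry (i,j) of D2 is a list of
  S_j conditionally iid outputs of the channel with input D1 (Theta^{-1} i) j.\<close>
definition db_dist :: "'x pmf \<Rightarrow> ('x \<Rightarrow> 'y pmf) \<Rightarrow> nat pmf \<Rightarrow> nat \<Rightarrow> nat
    \<Rightarrow> ((nat \<Rightarrow> nat) \<times> (nat \<Rightarrow> nat \<Rightarrow> 'y list)) pmf" where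
  "db_dist pX pYX pS m n = do {
     D1 \<leftarrow> Pi_pmf ({..<m} \<times> {..<n}) undefined (\<lambda>_. pX);
     S \<leftarrow> Pi_pmf {..<n} 0 (\<lambda>_. pS);
     \<Theta> \<leftarrow> pmf_of_set {\<sigma>. \<sigma> permutes {..<m}};
     D2 \<leftarrow> Pi_pmf ({..<m} \<times> {..<n}) []
             (\<lambda>(i, j). replicate_pmf (S j) (pYX (D1 (inv \<Theta> i, j))));
     return_pmf (S, curry D2) }"

definition num_cols :: "(nat \<Rightarrow> nat) \<Rightarrow> nat \<Rightarrow> nat" where
  "num_cols S n = (\<Sum>j<n. S j)"

definition col :: "nat \<Rightarrow> (nat \<Rightarrow> nat \<Rightarrow> 'y list) \<Rightarrow> nat \<Rightarrow> nat \<Rightarrow> 'y" where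
  "col n D2 c i = concat (map (\<lambda>j. D2 i j) [0..<n]) ! c"

definition origin :: "(nat \<Rightarrow> nat) \<Rightarrow> nat \<Rightarrow> nat \<Rightarrow> nat" where
  "origin S n c = concat (map (\<lambda>j. replicate (S j) j) [0..<n]) ! c"

definition dH :: "nat \<Rightarrow> (nat \<Rightarrow> 'y) \<Rightarrow> (nat \<Rightarrow> 'y) \<Rightarrow> nat" where
  "dH m C C' = card {i. i < m \<and> C i \<noteq> C' i}"

text \<open>Union of the error events E_j, j in [K-1] (0-based pairs (c, c+1)).\<close>
definition err_event :: "nat \<Rightarrow> nat \<Rightarrow> real
    \<Rightarrow> ((nat \<Rightarrow> nat) \<times> (nat \<Rightarrow> nat \<Rightarrow> 'y list)) set" where
  "err_event m n \<tau> = {(S, D2). \<exists>c. c + 1 < num_cols S n \<and>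
      ((real (dH m (col n D2 c) (col n D2 (c + 1))) < real m * \<tau>)
        \<noteq> (origin S n c = origin S n (c + 1)))}"

end

theory Submission
  imports Defs
begin

lemma prob_bind_le:
  assumes "\<And>x. x \<in> set_pmf M \<Longrightarrow> measure_pmf.prob (N x) X \<le> b" "0 \<le> b"
  shows "measure_pmf.prob (bind_pmf M N) X \<le> b"
proof -
  have "emeasure (measure_pmf (bind_pmf M N)) X = (\<integral>\<^sup>+x. emeasure (measure_pmf (N x)) X \<partial>M)"
    by simp
  also have "\<dots> \<le> (\<integral>\<^sup>+x. ennreal b \<partial>M)"
    using assms(1) by (intro nn_integral_mono_AE) (auto simp: AE_measure_pmf_iff measure_pmf.emeasure_eq_measure ennreal_leI)
  also have "\<dots> = ennreal b" by (simp add: measure_pmf.emeasure_space_1)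
  finally show ?thesis using assms(2) by (simp add: measure_pmf.emeasure_eq_measure)
qed

lemma p0_dist: "do { x1 \<leftarrow> pX; x2 \<leftarrow> pX; y1 \<leftarrow> pYX x1; y2 \<leftarrow> pYX x2; return_pmf (y1, y2) }
   = pair_pmf (out_pmf pX pYX) (out_pmf pX pYX)"
proof -
  have "do { x1 \<leftarrow> pX; x2 \<leftarrow> pX; y1 \<leftarrow> pYX x1; y2 \<leftarrow> pYX x2; return_pmf (y1, y2) }
     = do { x1 \<leftarrow> pX; y1 \<leftarrow> pYX x1; x2 \<leftarrow> pX; y2 \<leftarrow> pYX x2; return_pmf (y1, y2) }"
    by (subst bind_commute_pmf) simp
  also have "\<dots> = pair_pmf (out_pmf pX pYX) (out_pmf pX pYX)"
    by (simp add: pair_pmf_def out_pmf_def bind_assoc_pmf)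
  finally show ?thesis .
qed

lemma p1_dist: "do { x \<leftarrow> pX; y1 \<leftarrow> pYX x; y2 \<leftarrow> pYX x; return_pmf (y1, y2) }
   = bind_pmf pX (\<lambda>x. pair_pmf (pYX x) (pYX x))"
  by (simp add: pair_pmf_def)

lemma diag_prob:
  fixes M :: "('y::finite \<times> 'y) pmf"
  shows "measure_pmf.prob M {(a, b). a \<noteq> b} = 1 - (\<Sum>y\<in>UNIV. pmf M (y, y))"
proof -
  have "{(a, b). a \<noteq> b} = UNIV - (\<lambda>y. (y,y)) ` UNIV" by auto
  hence "measure_pmf.prob M {(a, b). a \<noteq> b} = 1 - measure_pmf.prob M ((\<lambda>y. (y,y)) ` UNIV)"
    using measure_pmf.prob_compl[of "(\<lambda>y. (y,y)) ` UNIV" M] by (metis (no_types) sets_measure_pmf space_measure_pmf UNIV_I)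
  also have "measure_pmf.prob M ((\<lambda>y. (y,y)) ` UNIV) = (\<Sum>y\<in>UNIV. pmf M (y, y))"
    by (subst measure_measure_pmf_finite) (auto simp: sum.reindex inj_on_def)
  finally show ?thesis .
qed

lemma pmf_out: "pmf (out_pmf pX pYX) y = (\<Sum>x\<in>UNIV. pmf pX x * pmf (pYX x) y)"
  for pX :: "'x::finite pmf"
  unfolding out_pmf_def pmf_bind
  by (subst integral_measure_pmf_real[where A=UNIV]) (auto simp: mult.commute)

lemma pmf_p1dist: "pmf (bind_pmf pX (\<lambda>x. pair_pmf (pYX x) (pYX x))) (u, v)
   = (\<Sum>x\<in>UNIV. pmf pX x * (pmf (pYX x) u * pmf (pYX x) v))"
  for pX :: "'x::finite pmf"
  unfolding pmf_bind
  by (subst integral_measure_pmf_real[where A=UNIV]) (auto simp: mult.commute pmf_pair)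

lemma pmf_joint: "pmf (joint_pmf pX pYX) (x, y) = pmf pX x * pmf (pYX x) y"
  for pX :: "'x::finite pmf"
proof -
  have "pmf (joint_pmf pX pYX) (x, y) = (\<Sum>x'\<in>UNIV. pmf pX x' * pmf (map_pmf (Pair x') (pYX x')) (x, y))"
    unfolding joint_pmf_def pmf_bind map_pmf_def[symmetric]
    by (subst integral_measure_pmf_real[where A=UNIV]) (auto simp: mult.commute map_pmf_def)
  also have "\<dots> = (\<Sum>x'\<in>UNIV. if x' = x then pmf pX x * pmf (pYX x) y else 0)"
  proof (intro sum.cong refl)
    fix x' show "pmf pX x' * pmf (map_pmf (Pair x') (pYX x')) (x, y) = (if x' = x then pmf pX x * pmf (pYX x) y else 0)"
    proof (cases "x' = x")
      case True thus ?thesis by (simp add: pmf_map_inj' inj_on_def)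
    next
      case False
      have "(x, y) \<notin> set_pmf (map_pmf (Pair x') (pYX x'))" using False by auto
      thus ?thesis using False by (simp add: set_pmf_eq)
    qed
  qed
  also have "\<dots> = pmf pX x * pmf (pYX x) y" by simp
  finally show ?thesis .
qed

lemma p1_lt_p0:
  fixes pX :: "'x::finite pmf" and pYX :: "'x \<Rightarrow> 'y::finite pmf"
  assumes "joint_pmf pX pYX \<noteq> pair_pmf pX (out_pmf pX pYX)"
  shows "p1 pX pYX < p0 pX pYX"
proof -
  define a where "a = pmf pX"
  define q where "q x y = pmf (pYX x) y" for x y
  define r where "r y = (\<Sum>x\<in>UNIV. a x * q x y)" for y
  have sa: "(\<Sum>x\<in>UNIV. a x) = 1" unfolding a_def by (simp add: sum_pmf_eq_1)
  have a0: "a x \<ge> 0" for x by (simp add: a_def)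
  have p1e: "p1 pX pYX = 1 - (\<Sum>y\<in>UNIV. \<Sum>x\<in>UNIV. a x * (q x y * q x y))"
    unfolding p1_def p1_dist diag_prob pmf_p1dist a_def q_def ..
  have p0e: "p0 pX pYX = 1 - (\<Sum>y\<in>UNIV. r y * r y)"
    unfolding p0_def p0_dist diag_prob pmf_pair pmf_out r_def a_def q_def ..
  have key: "(\<Sum>x\<in>UNIV. a x * (q x y * q x y)) - r y * r y = (\<Sum>x\<in>UNIV. a x * (q x y - r y)^2)" for y
  proof -
    have "(\<Sum>x\<in>UNIV. a x * (q x y - r y)^2) = (\<Sum>x\<in>UNIV. a x * (q x y * q x y)) - 2 * r y * (\<Sum>x\<in>UNIV. a x * q x y) + r y * r y * (\<Sum>x\<in>UNIV. a x)"
      by (simp add: power2_eq_square algebra_simps sum.distrib sum_subtractf sum_distrib_left)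
    thus ?thesis by (simp add: sa r_def[symmetric] power2_eq_square)
  qed
  obtain x0 y0 where ne: "pmf (joint_pmf pX pYX) (x0, y0) \<noteq> pmf (pair_pmf pX (out_pmf pX pYX)) (x0, y0)"
    using assms pmf_eqI by (metis surj_pair)
  hence ne': "a x0 * q x0 y0 \<noteq> a x0 * r y0"
    by (simp add: pmf_joint pmf_pair pmf_out a_def q_def r_def)
  hence pos: "a x0 * (q x0 y0 - r y0)^2 > 0"
    using a0[of x0] by (cases "a x0 = 0") auto
  have "(\<Sum>y\<in>UNIV. (\<Sum>x\<in>UNIV. a x * (q x y - r y)^2)) > 0"
  proof -
    have "(\<Sum>x\<in>UNIV. a x * (q x y0 - r y0)^2) > 0"
      by (rule sum_pos2[where i=x0]) (use pos a0 in auto)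
    thus ?thesis by (intro sum_pos2[where i=y0]) (auto intro!: sum_nonneg simp: a0)
  qed
  also have "(\<Sum>y\<in>UNIV. (\<Sum>x\<in>UNIV. a x * (q x y - r y)^2)) = (\<Sum>y\<in>UNIV. \<Sum>x\<in>UNIV. a x * (q x y * q x y)) - (\<Sum>y\<in>UNIV. r y * r y)"
    by (simp add: key[symmetric] sum_subtractf)
  finally show ?thesis unfolding p1e p0e by simp
qed

lemma concat_nth_shape:
  "c < sum_list ls \<Longrightarrow> \<exists>i k. i < length ls \<and> k < ls ! i \<and>
     (\<forall>ys::'a list list. map length ys = ls \<longrightarrow> concat ys ! c = ys ! i ! k)"
proof (induction ls arbitrary: c)
  case Nil thus ?case by simp
next
  case (Cons l ls)
  show ?case
  proof (cases "c < l")
    case True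
    have "\<forall>ys::'a list list. map length ys = l # ls \<longrightarrow> concat ys ! c = ys ! 0 ! c"
    proof (intro allI impI)
      fix ys :: "'a list list" assume a: "map length ys = l # ls"
      then obtain y ys' where yy: "ys = y # ys'" by (cases ys) simp_all
      with a have "length y = l" by simp
      thus "concat ys ! c = ys ! 0 ! c" using True yy by (simp add: nth_append)
    qed
    moreover have "0 < length (l # ls)" "c < (l # ls) ! 0" using True by simp_all
    ultimately show ?thesis by blast
  next
    case False
    with Cons.prems have "c - l < sum_list ls" by simp
    from Cons.IH[OF this] obtain i k where ik: "i < length ls" "k < ls ! i"
      "\<forall>ys::'a list list. map length ys = ls \<longrightarrow> concat ys ! (c - l) = ys ! i ! k" by blast
    have "\<forall>ys::'a list list. map length ys = l # ls \<longrightarrow> concat ys ! c = ys ! Suc i ! k"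
    proof (intro allI impI)
      fix ys :: "'a list list" assume a: "map length ys = l # ls"
      then obtain y ys' where yy: "ys = y # ys'" by (cases ys) simp_all
      with a have "length y = l" "map length ys' = ls" by simp_all
      thus "concat ys ! c = ys ! Suc i ! k" using False ik(3) yy by (simp add: nth_append)
    qed
    moreover have "Suc i < length (l # ls)" "k < (l # ls) ! Suc i" using ik by simp_all
    ultimately show ?thesis by blast
  qed
qed

lemma concat_shape_exists:
  "length zs = sum_list ls \<Longrightarrow> \<exists>ys. map length ys = ls \<and> concat ys = zs"
proof (induction ls arbitrary: zs)
  case Nil thus ?case by simp
next
  case (Cons l ls)
  from Cons.prems have "length (drop l zs) = sum_list ls" by simp
  from Cons.IH[OF this] obtain ys where "map length ys = ls" "concat ys = drop l zs" by blast
  moreover have "length (take l zs) = l" using Cons.prems by simp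
  ultimately have "map length (take l zs # ys) = l # ls \<and> concat (take l zs # ys) = zs" by simp
  thus ?case by (rule exI)
qed

lemma rep_Suc: "replicate_pmf (Suc s) q = bind_pmf q (\<lambda>x. map_pmf (\<lambda>xs. x # xs) (replicate_pmf s q))"
  by (simp only: replicate_pmf.simps map_pmf_def)

lemma replicate_pmf_nth: "k < s \<Longrightarrow> map_pmf (\<lambda>l. l ! k) (replicate_pmf s q) = q"
proof (induction s arbitrary: k)
  case 0 thus ?case by simp
next
  case (Suc s)
  show ?case
  proof (cases k)
    case 0
    have "map_pmf (\<lambda>l. l ! k) (replicate_pmf (Suc s) q) = bind_pmf q (\<lambda>x. map_pmf (\<lambda>_. x) (replicate_pmf s q))"
      by (simp only: rep_Suc map_bind_pmf map_pmf_comp nth_Cons_0 0)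
    also have "\<dots> = bind_pmf q return_pmf" by (simp only: map_pmf_const)
    finally show ?thesis by (simp only: bind_return_pmf')
  next
    case (Suc k')
    with Suc.prems have "k' < s" by simp
    have "map_pmf (\<lambda>l. l ! k) (replicate_pmf (Suc s) q) = bind_pmf q (\<lambda>x. map_pmf (\<lambda>l. l ! k') (replicate_pmf s q))"
      by (simp only: rep_Suc map_bind_pmf map_pmf_comp nth_Cons_Suc Suc)
    also have "\<dots> = bind_pmf q (\<lambda>_. q)" by (simp only: Suc.IH[OF \<open>k' < s\<close>])
    finally show ?thesis by (simp only: bind_pmf_const)
  qed
qed

lemma replicate_pmf_nth2:
  "k < s \<Longrightarrow> k' < s \<Longrightarrow> k \<noteq> k' \<Longrightarrow>
    map_pmf (\<lambda>l. (l ! k, l ! k')) (replicate_pmf s q) = pair_pmf q q"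
proof (induction s arbitrary: k k')
  case 0 thus ?case by simp
next
  case (Suc s)
  show ?case
  proof (cases k)
    case 0
    with Suc.prems obtain k'' where k'': "k' = Suc k''" "k'' < s" by (cases k') auto
    have "map_pmf (\<lambda>l. (l ! k, l ! k')) (replicate_pmf (Suc s) q) =
          bind_pmf q (\<lambda>x. map_pmf (\<lambda>y. (x, y)) (map_pmf (\<lambda>l. l ! k'') (replicate_pmf s q)))"
      by (simp only: rep_Suc map_bind_pmf map_pmf_comp 0 k''(1) nth_Cons_0 nth_Cons_Suc)
    also have "\<dots> = bind_pmf q (\<lambda>x. map_pmf (\<lambda>y. (x, y)) q)"
      by (simp only: replicate_pmf_nth[OF k''(2)])
    also have "\<dots> = pair_pmf q q"
      by (simp only: pair_pmf_def map_pmf_def)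
    finally show ?thesis .
  next
    case (Suc k1)
    show ?thesis
    proof (cases k')
      case 0
      with Suc.prems \<open>k = Suc k1\<close> have k1: "k1 < s" by simp
      have "map_pmf (\<lambda>l. (l ! k, l ! k')) (replicate_pmf (Suc s) q) =
            bind_pmf q (\<lambda>x. map_pmf (\<lambda>y. (y, x)) (map_pmf (\<lambda>l. l ! k1) (replicate_pmf s q)))"
        by (simp only: rep_Suc map_bind_pmf map_pmf_comp 0 \<open>k = Suc k1\<close> nth_Cons_0 nth_Cons_Suc)
      also have "\<dots> = bind_pmf q (\<lambda>x. map_pmf (\<lambda>y. (y, x)) q)" by (simp only: replicate_pmf_nth[OF k1])
      also have "\<dots> = bind_pmf q (\<lambda>x. bind_pmf q (\<lambda>y. return_pmf (y, x)))" by (simp only: map_pmf_def)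
      also have "\<dots> = pair_pmf q q"
        unfolding pair_pmf_def by (rule bind_commute_pmf)
      finally show ?thesis .
    next
      case (Suc k2)
      with Suc.prems \<open>k = Suc k1\<close> have k12: "k1 < s" "k2 < s" "k1 \<noteq> k2" by auto
      have "map_pmf (\<lambda>l. (l ! k, l ! k')) (replicate_pmf (Suc s) q) =
            bind_pmf q (\<lambda>x. map_pmf (\<lambda>l. (l ! k1, l ! k2)) (replicate_pmf s q))"
        by (simp only: rep_Suc map_bind_pmf map_pmf_comp Suc \<open>k = Suc k1\<close> nth_Cons_Suc)
      also have "\<dots> = bind_pmf q (\<lambda>_. pair_pmf q q)" by (simp only: Suc.IH[OF k12])
      also have "\<dots> = pair_pmf q q" by (simp only: bind_pmf_const)
      finally show ?thesis .
    qed
  qed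
qed

lemma Pi_pmf_Sigma:
  assumes "finite A" "finite B"
  shows "Pi_pmf (A \<times> B) d (\<lambda>(a, b). Q a b) =
         map_pmf case_prod (Pi_pmf A (\<lambda>_. d) (\<lambda>a. Pi_pmf B d (Q a)))"
proof (rule pmf_eqI)
  fix g :: "'a \<times> 'b \<Rightarrow> 'c"
  have inj: "inj (case_prod :: ('a \<Rightarrow> 'b \<Rightarrow> 'c) \<Rightarrow> _)"
    by (intro injI) (metis curry_case_prod)
  have g: "g = case_prod (curry g)" by simp
  have "pmf (map_pmf case_prod (Pi_pmf A (\<lambda>_. d) (\<lambda>a. Pi_pmf B d (Q a)))) g
        = pmf (Pi_pmf A (\<lambda>_. d) (\<lambda>a. Pi_pmf B d (Q a))) (curry g)"
    by (subst g, subst pmf_map_inj'[OF inj]) simp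
  also have "\<dots> = pmf (Pi_pmf (A \<times> B) d (\<lambda>(a, b). Q a b)) g"
  proof (cases "\<forall>x. x \<notin> A \<times> B \<longrightarrow> g x = d")
    case True
    hence "\<forall>x. x \<notin> A \<longrightarrow> curry g x = (\<lambda>_. d)" by (auto simp: fun_eq_iff)
    hence "pmf (Pi_pmf A (\<lambda>_. d) (\<lambda>a. Pi_pmf B d (Q a))) (curry g) =
          (\<Prod>a\<in>A. pmf (Pi_pmf B d (Q a)) (curry g a))" using assms by (simp add: pmf_Pi)
    also have "\<dots> = (\<Prod>a\<in>A. \<Prod>b\<in>B. pmf (Q a b) (g (a, b)))"
      using True assms by (intro prod.cong refl) (auto simp: pmf_Pi)
    also have "\<dots> = (\<Prod>x\<in>A \<times> B. pmf ((\<lambda>(a, b). Q a b) x) (g x))"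
      by (simp add: prod.cartesian_product case_prod_unfold)
    also have "\<dots> = pmf (Pi_pmf (A \<times> B) d (\<lambda>(a, b). Q a b)) g"
      using True assms by (simp add: pmf_Pi)
    finally show ?thesis .
  next
    case False
    then obtain a b where ab: "(a, b) \<notin> A \<times> B" "g (a, b) \<noteq> d" by auto
    have "pmf (Pi_pmf A (\<lambda>_. d) (\<lambda>a. Pi_pmf B d (Q a))) (curry g) = 0"
    proof (cases "a \<in> A")
      case False
      thus ?thesis using ab assms by (intro pmf_Pi_outside) (auto simp: fun_eq_iff)
    next
      case True
      with ab have "b \<notin> B" by auto
      have "pmf (Pi_pmf B d (Q a)) (curry g a) = 0"
        using ab \<open>b \<notin> B\<close> assms by (intro pmf_Pi_outside) auto
      hence "(\<Prod>a\<in>A. pmf (Pi_pmf B d (Q a)) (curry g a)) = 0"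
        using True assms by (intro prod_zero) auto
      thus ?thesis using assms by (auto simp: pmf_Pi)
    qed
    moreover have "pmf (Pi_pmf (A \<times> B) d (\<lambda>(a, b). Q a b)) g = 0"
      using ab assms by (intro pmf_Pi_outside) auto
    ultimately show ?thesis by simp
  qed
  finally show "pmf (Pi_pmf (A \<times> B) d (\<lambda>(a, b). Q a b)) g =
        pmf (map_pmf case_prod (Pi_pmf A (\<lambda>_. d) (\<lambda>a. Pi_pmf B d (Q a)))) g" ..
qed

lemma Pi_pmf_pair:
  assumes "finite B" "j \<in> B" "j' \<in> B" "j \<noteq> j'"
  shows "map_pmf (\<lambda>L. (L j, L j')) (Pi_pmf B d Q) = pair_pmf (Q j) (Q j')"
proof -
  have "Pi_pmf {j, j'} d Q = map_pmf (\<lambda>f x. if x \<in> {j, j'} then f x else d) (Pi_pmf B d Q)"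
    using assms by (intro Pi_pmf_subset) auto
  hence "map_pmf (\<lambda>L. (L j, L j')) (Pi_pmf B d Q) = map_pmf (\<lambda>L. (L j, L j')) (Pi_pmf {j, j'} d Q)"
    by (simp add: map_pmf_comp)
  also have "Pi_pmf {j, j'} d Q = map_pmf (\<lambda>(y, f). f(j := y)) (pair_pmf (Q j) (Pi_pmf {j'} d Q))"
    using assms by (intro Pi_pmf_insert) auto
  also have "map_pmf (\<lambda>L. (L j, L j')) \<dots> = map_pmf (\<lambda>(y, f). (y, f j')) (pair_pmf (Q j) (Pi_pmf {j'} d Q))"
    using assms by (simp add: map_pmf_comp case_prod_unfold)
  also have "\<dots> = pair_pmf (Q j) (map_pmf (\<lambda>f. f j') (Pi_pmf {j'} d Q))"
    by (simp add: pair_map_pmf2 apsnd_def map_prod_def case_prod_unfold)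
  also have "map_pmf (\<lambda>f. f j') (Pi_pmf {j'} d Q) = Q j'"
    by (subst Pi_pmf_component) auto
  finally show ?thesis .
qed

definition Qcol :: "'x pmf \<Rightarrow> ('x \<Rightarrow> 'y pmf) \<Rightarrow> nat \<Rightarrow> 'y list pmf" where
  "Qcol pX pYX s = bind_pmf pX (\<lambda>x. replicate_pmf s (pYX x))"

definition Qfull :: "'x pmf \<Rightarrow> ('x \<Rightarrow> 'y pmf) \<Rightarrow> (nat \<Rightarrow> nat) \<Rightarrow> nat \<Rightarrow> nat \<Rightarrow> (nat \<times> nat \<Rightarrow> 'y list) pmf" where
  "Qfull pX pYX S m n = Pi_pmf ({..<m} \<times> {..<n}) [] (\<lambda>(i, j). Qcol pX pYX (S j))"

lemma remove_perm:
  assumes perm: "\<Theta> permutes {..<m}"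
  shows "bind_pmf (Pi_pmf ({..<m} \<times> {..<n}) undefined (\<lambda>_. pX))
           (\<lambda>D1. Pi_pmf ({..<m} \<times> {..<n}) [] (\<lambda>(i, j). replicate_pmf (S j) (pYX (D1 (inv \<Theta> i, j)))))
         = Qfull pX pYX S m n"
proof -
  define AB where "AB = {..<m} \<times> {..<n}"
  define h where "h = (\<lambda>(i::nat, j::nat). (inv \<Theta> i, j))"
  define R where "R = (\<lambda>(k::nat \<times> nat) x. replicate_pmf (S (snd k)) (pYX x))"
  have fin: "finite AB" by (simp add: AB_def)
  have iperm: "inv \<Theta> permutes {..<m}" using permutes_inv[OF perm] .
  have im1: "\<Theta> a < m" if "a < m" for a using permutes_in_image[OF perm, of a] that by simp
  have im2: "inv \<Theta> a < m" if "a < m" for a using permutes_in_image[OF iperm, of a] that by simp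
  have im3: "\<not> inv \<Theta> a < m" if "\<not> a < m" for a using permutes_in_image[OF iperm, of a] that by simp
  have bij: "bij_betw h AB AB"
    unfolding h_def AB_def
    by (rule bij_betwI[where g="\<lambda>(i, j). (\<Theta> i, j)"])
       (auto simp: permutes_inverses[OF perm] im1 im2)
  have outside: "h x \<notin> AB" if "x \<notin> AB" for x
    using that unfolding h_def AB_def
    using im3 by (auto split: prod.splits)
  have P1: "Pi_pmf AB undefined (\<lambda>_. pX) = map_pmf (\<lambda>g. g \<circ> h) (Pi_pmf AB undefined (\<lambda>_. pX))"
    by (rule Pi_pmf_bij_betw[OF fin bij outside])
  have eq: "(\<lambda>(i, j). replicate_pmf (S j) (pYX (D1 (inv \<Theta> i, j)))) = (\<lambda>k. R k ((D1 \<circ> h) k))" for D1 :: "nat \<times> nat \<Rightarrow> _"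
    by (auto simp: R_def h_def fun_eq_iff)
  have "bind_pmf (Pi_pmf AB undefined (\<lambda>_. pX))
           (\<lambda>D1. Pi_pmf AB [] (\<lambda>(i, j). replicate_pmf (S j) (pYX (D1 (inv \<Theta> i, j)))))
        = bind_pmf (map_pmf (\<lambda>g. g \<circ> h) (Pi_pmf AB undefined (\<lambda>_. pX))) (\<lambda>D. Pi_pmf AB [] (\<lambda>k. R k (D k)))"
    by (simp only: eq bind_map_pmf)
  also have "\<dots> = bind_pmf (Pi_pmf AB undefined (\<lambda>_. pX)) (\<lambda>D. Pi_pmf AB [] (\<lambda>k. R k (D k)))"
    by (simp only: P1[symmetric])
  also have "\<dots> = Pi_pmf AB [] (\<lambda>k. bind_pmf pX (R k))"
    by (rule Pi_pmf_bind[OF fin, symmetric])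
  also have "\<dots> = Qfull pX pYX S m n"
    unfolding Qfull_def AB_def R_def Qcol_def by (intro Pi_pmf_cong) auto
  finally show ?thesis unfolding AB_def .
qed

lemma db_dist_alt:
  "db_dist pX pYX pS m n = bind_pmf (Pi_pmf {..<n} 0 (\<lambda>_. pS))
      (\<lambda>S. map_pmf (\<lambda>D2. (S, curry D2)) (Qfull pX pYX S m n))"
proof -
  define P1 where "P1 = Pi_pmf ({..<m} \<times> {..<n}) undefined (\<lambda>_. pX)"
  define PS where "PS = Pi_pmf {..<n} 0 (\<lambda>_. pS)"
  define U where "U = pmf_of_set {\<sigma>. \<sigma> permutes {..<m}}"
  define F where "F = (\<lambda>(D1 :: nat \<times> nat \<Rightarrow> _) S (\<Theta> :: nat \<Rightarrow> nat). bind_pmf (Pi_pmf ({..<m} \<times> {..<n}) []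
             (\<lambda>(i, j). replicate_pmf (S j) (pYX (D1 (inv \<Theta> i, j))))) (\<lambda>D2. return_pmf (S, curry D2)))"
  have "db_dist pX pYX pS m n = bind_pmf P1 (\<lambda>D1. bind_pmf PS (\<lambda>S. bind_pmf U (\<lambda>\<Theta>. F D1 S \<Theta>)))"
    unfolding db_dist_def P1_def PS_def U_def F_def ..
  also have "\<dots> = bind_pmf PS (\<lambda>S. bind_pmf P1 (\<lambda>D1. bind_pmf U (\<lambda>\<Theta>. F D1 S \<Theta>)))"
    by (rule bind_commute_pmf)
  also have "\<dots> = bind_pmf PS (\<lambda>S. bind_pmf U (\<lambda>\<Theta>. bind_pmf P1 (\<lambda>D1. F D1 S \<Theta>)))"
    by (subst bind_commute_pmf) (rule refl)
  also have "\<dots> = bind_pmf PS (\<lambda>S. bind_pmf U (\<lambda>\<Theta>. map_pmf (\<lambda>D2. (S, curry D2)) (Qfull pX pYX S m n)))"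
  proof (intro bind_pmf_cong refl)
    fix S \<Theta> assume "\<Theta> \<in> set_pmf U"
    hence perm: "\<Theta> permutes {..<m}" unfolding U_def
      by (subst (asm) set_pmf_of_set) (auto simp: finite_permutations permutes_id intro: exI[of _ id])
    have "bind_pmf P1 (\<lambda>D1. F D1 S \<Theta>) = map_pmf (\<lambda>D2. (S, curry D2))
       (bind_pmf P1 (\<lambda>D1. Pi_pmf ({..<m} \<times> {..<n}) [] (\<lambda>(i, j). replicate_pmf (S j) (pYX (D1 (inv \<Theta> i, j))))))"
      unfolding F_def map_pmf_def by (simp only: bind_assoc_pmf)
    also have "\<dots> = map_pmf (\<lambda>D2. (S, curry D2)) (Qfull pX pYX S m n)"
      unfolding P1_def by (simp only: remove_perm[OF perm])
    finally show "bind_pmf P1 (\<lambda>D1. F D1 S \<Theta>) = map_pmf (\<lambda>D2. (S, curry D2)) (Qfull pX pYX S m n)" .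
  qed
  also have "\<dots> = bind_pmf PS (\<lambda>S. map_pmf (\<lambda>D2. (S, curry D2)) (Qfull pX pYX S m n))"
    by (simp only: bind_pmf_const)
  finally show ?thesis unfolding PS_def .
qed

lemma sum_list_S: "sum_list (map S [0..<n]) = num_cols S n"
  unfolding num_cols_def by (simp add: interv_sum_list_conv_sum_set_nat atLeast0LessThan)

lemma bool_pmf_bernoulli: "map_pmf P M = bernoulli_pmf (measure_pmf.prob M {x. P x})"
proof (rule pmf_eqI)
  fix b :: bool
  have T: "pmf (map_pmf P M) True = measure_pmf.prob M {x. P x}"
    by (simp add: pmf_map vimage_def)
  have 01: "0 \<le> measure_pmf.prob M {x. P x}" "measure_pmf.prob M {x. P x} \<le> 1" by simp_all
  show "pmf (map_pmf P M) b = pmf (bernoulli_pmf (measure_pmf.prob M {x. P x})) b"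
    using T 01 by (cases b) (simp_all add: pmf_False_conv_True[of "map_pmf P M"])
qed

lemma Qcol_nth: "k < s \<Longrightarrow> map_pmf (\<lambda>l. l ! k) (Qcol pX pYX s) = out_pmf pX pYX"
  unfolding Qcol_def out_pmf_def map_bind_pmf by (simp only: replicate_pmf_nth)

lemma Qcol_nth2: "k < s \<Longrightarrow> k' < s \<Longrightarrow> k \<noteq> k' \<Longrightarrow>
  map_pmf (\<lambda>l. (l ! k, l ! k')) (Qcol pX pYX s) = bind_pmf pX (\<lambda>x. pair_pmf (pYX x) (pYX x))"
  unfolding Qcol_def map_bind_pmf by (simp add: replicate_pmf_nth2)

lemma Qfull_support:
  assumes "D2 \<in> set_pmf (Qfull pX pYX S m n)" "i < m" "j < n"
  shows "length (D2 (i, j)) = S j"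
proof -
  have "D2 (i, j) \<in> set_pmf (Qcol pX pYX (S j))"
    using assms unfolding Qfull_def by (subst (asm) set_Pi_pmf) (auto simp: PiE_dflt_def)
  thus ?thesis unfolding Qcol_def by (auto simp: set_replicate_pmf)
qed

lemma bernoulli_mismatch:
  fixes n j j' :: nat
  assumes j: "j < n" "j' < n" and k: "k < S j" "k' < S j'" and ne: "j = j' \<Longrightarrow> k \<noteq> k'"
  shows "map_pmf (\<lambda>L. L j ! k \<noteq> L j' ! k') (Pi_pmf {..<n} [] (\<lambda>j. Qcol pX pYX (S j)))
       = bernoulli_pmf (if j = j' then p1 pX pYX else p0 pX pYX)"
proof (cases "j = j'")
  case True
  have "map_pmf (\<lambda>L. L j ! k \<noteq> L j' ! k') (Pi_pmf {..<n} [] (\<lambda>j. Qcol pX pYX (S j)))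
      = map_pmf (\<lambda>(a, b). a \<noteq> b) (map_pmf (\<lambda>l. (l ! k, l ! k')) (map_pmf (\<lambda>L. L j) (Pi_pmf {..<n} [] (\<lambda>j. Qcol pX pYX (S j)))))"
    by (simp add: map_pmf_comp True)
  also have "map_pmf (\<lambda>L. L j) (Pi_pmf {..<n} [] (\<lambda>j. Qcol pX pYX (S j))) = Qcol pX pYX (S j)"
    using j by (subst Pi_pmf_component) auto
  also have "map_pmf (\<lambda>l. (l ! k, l ! k')) (Qcol pX pYX (S j)) = bind_pmf pX (\<lambda>x. pair_pmf (pYX x) (pYX x))"
    using True k ne by (intro Qcol_nth2) auto
  also have "map_pmf (\<lambda>(a, b). a \<noteq> b) \<dots> = bernoulli_pmf (p1 pX pYX)"
    unfolding bool_pmf_bernoulli p1_def p1_dist by simp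
  finally show ?thesis using True by simp
next
  case False
  have "map_pmf (\<lambda>L. L j ! k \<noteq> L j' ! k') (Pi_pmf {..<n} [] (\<lambda>j. Qcol pX pYX (S j)))
      = map_pmf (\<lambda>(a, b). a ! k \<noteq> b ! k') (map_pmf (\<lambda>L. (L j, L j')) (Pi_pmf {..<n} [] (\<lambda>j. Qcol pX pYX (S j))))"
    by (simp add: map_pmf_comp)
  also have "map_pmf (\<lambda>L. (L j, L j')) (Pi_pmf {..<n} [] (\<lambda>j. Qcol pX pYX (S j))) =
      pair_pmf (Qcol pX pYX (S j)) (Qcol pX pYX (S j'))"
    using j False by (intro Pi_pmf_pair) auto
  also have "map_pmf (\<lambda>(a, b). a ! k \<noteq> b ! k') \<dots> =
      map_pmf (\<lambda>(a, b). a \<noteq> b) (pair_pmf (map_pmf (\<lambda>l. l ! k) (Qcol pX pYX (S j))) (map_pmf (\<lambda>l. l ! k') (Qcol pX pYX (S j'))))"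
    by (simp add: pair_map_pmf1 pair_map_pmf2 map_pmf_comp case_prod_unfold)
  also have "\<dots> = map_pmf (\<lambda>(a, b). a \<noteq> b) (pair_pmf (out_pmf pX pYX) (out_pmf pX pYX))"
    using k by (simp only: Qcol_nth)
  also have "\<dots> = bernoulli_pmf (p0 pX pYX)"
    unfolding bool_pmf_bernoulli p0_def p0_dist by simp
  finally show ?thesis using False by simp
qed

fun pos :: "nat list \<Rightarrow> nat \<Rightarrow> nat \<times> nat" where
  "pos [] c = (0, c)"
| "pos (l # ls) c = (if c < l then (0, c) else (Suc (fst (pos ls (c - l))), snd (pos ls (c - l))))"

lemma pos_bounds: "c < sum_list ls \<Longrightarrow> fst (pos ls c) < length ls \<and> snd (pos ls c) < ls ! fst (pos ls c)"
  by (induction ls arbitrary: c) auto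

lemma pos_nth: "c < sum_list ls \<Longrightarrow> map length ys = ls \<Longrightarrow> concat ys ! c = ys ! fst (pos ls c) ! snd (pos ls c)"
proof (induction ls arbitrary: c ys)
  case Nil thus ?case by simp
next
  case (Cons l ls)
  from Cons.prems(2) obtain y ys' where yy: "ys = y # ys'" "length y = l" "map length ys' = ls"
    by (cases ys) auto
  show ?case
  proof (cases "c < l")
    case True thus ?thesis using yy by (simp add: nth_append)
  next
    case False
    with Cons.prems have "c - l < sum_list ls" by simp
    from Cons.IH[OF this yy(3)] show ?thesis using yy False by (simp add: nth_append)
  qed
qed

lemma dH_binomial:
  fixes S :: "nat \<Rightarrow> nat" and pX :: "'x pmf" and pYX :: "'x \<Rightarrow> 'y pmf"
  assumes c: "c + 1 < num_cols S n"
  shows "map_pmf (\<lambda>D2. dH m (col n (curry D2) c) (col n (curry D2) (c + 1))) (Qfull pX pYX S m n)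
         = binomial_pmf m (if origin S n c = origin S n (c + 1) then p1 pX pYX else p0 pX pYX)"
proof -
  define ls where "ls = map S [0..<n]"
  have sl: "sum_list ls = num_cols S n" unfolding ls_def by (rule sum_list_S)
  define j where "j = fst (pos ls c)"
  define k where "k = snd (pos ls c)"
  define j' where "j' = fst (pos ls (c + 1))"
  define k' where "k' = snd (pos ls (c + 1))"
  have c0: "c < sum_list ls" and c1: "c + 1 < sum_list ls" using c sl by auto
  have jk: "j < n" "k < S j" using pos_bounds[OF c0] unfolding j_def k_def ls_def by auto
  have jk': "j' < n" "k' < S j'" using pos_bounds[OF c1] unfolding j'_def k'_def ls_def by auto
  have orig: "origin S n c = j" "origin S n (c + 1) = j'"
  proof -
    define ys where "ys = map (\<lambda>j. replicate (S j) j) [0..<n]"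
    have ml: "map length ys = ls" unfolding ys_def ls_def by simp
    show "origin S n c = j" unfolding origin_def ys_def[symmetric] pos_nth[OF c0 ml]
      using jk unfolding ys_def j_def[symmetric] k_def[symmetric] by (simp add: curry_def)
    show "origin S n (c + 1) = j'" unfolding origin_def ys_def[symmetric] pos_nth[OF c1 ml]
      using jk' unfolding ys_def j'_def[symmetric] k'_def[symmetric] by (simp add: curry_def)
  qed
  have ne: "k \<noteq> k'" if "j = j'"
  proof
    assume "k = k'"
    have "length [0..<sum_list ls] = sum_list ls" by simp
    from concat_shape_exists[OF this] obtain ys where ys: "map length ys = ls" "concat ys = [0..<sum_list ls]"
      by blast
    have "c = concat ys ! c" using ys(2) c0 by simp
    also have "\<dots> = concat ys ! (c + 1)"
      unfolding pos_nth[OF c0 ys(1)] pos_nth[OF c1 ys(1)]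
      using that \<open>k = k'\<close> unfolding j_def j'_def k_def k'_def by simp
    also have "\<dots> = c + 1" using ys(2) c1 by simp
    finally show False by simp
  qed
  define \<phi> where "\<phi> = (\<lambda>L::nat \<Rightarrow> 'y list. L j ! k \<noteq> L j' ! k')"
  define R where "R = Pi_pmf {..<n} [] (\<lambda>j. Qcol pX pYX (S j))"
  define p where "p = (if j = j' then p1 pX pYX else p0 pX pYX)"
  have colD: "col n (curry D2) c i = D2 (i, j) ! k" "col n (curry D2) (c + 1) i = D2 (i, j') ! k'"
    if "D2 \<in> set_pmf (Qfull pX pYX S m n)" "i < m" for D2 i
  proof -
    define ys where "ys = map (\<lambda>j. D2 (i, j)) [0..<n]"
    have ml: "map length ys = ls" unfolding ys_def ls_def
      using Qfull_support[OF that] by simp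
    show "col n (curry D2) c i = D2 (i, j) ! k" unfolding col_def
      using pos_nth[OF c0 ml] jk unfolding ys_def j_def[symmetric] k_def[symmetric] by (simp add: curry_def)
    show "col n (curry D2) (c + 1) i = D2 (i, j') ! k'" unfolding col_def
      using pos_nth[OF c1 ml] jk' unfolding ys_def j'_def[symmetric] k'_def[symmetric] by (simp add: curry_def)
  qed
  have QE: "Qfull pX pYX S m n = map_pmf case_prod (Pi_pmf {..<m} (\<lambda>_. []) (\<lambda>_. R))"
    unfolding Qfull_def R_def
    using Pi_pmf_Sigma[of "{..<m}" "{..<n}" "[]" "\<lambda>a b. Qcol pX pYX (S b)"] by simp
  have "map_pmf (\<lambda>D2. dH m (col n (curry D2) c) (col n (curry D2) (c + 1))) (Qfull pX pYX S m n)
      = map_pmf (\<lambda>D2. card {i\<in>{..<m}. \<phi> (curry D2 i)}) (Qfull pX pYX S m n)"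
  proof (rule map_pmf_cong[OF refl])
    fix D2 assume D2: "D2 \<in> set_pmf (Qfull pX pYX S m n)"
    have "{i. i < m \<and> col n (curry D2) c i \<noteq> col n (curry D2) (c + 1) i} = {i\<in>{..<m}. \<phi> (curry D2 i)}"
      using colD[OF D2] unfolding \<phi>_def by auto
    thus "dH m (col n (curry D2) c) (col n (curry D2) (c + 1)) = card {i\<in>{..<m}. \<phi> (curry D2 i)}"
      unfolding dH_def by simp
  qed
  also have "map_pmf (\<lambda>D2. card {i\<in>{..<m}. \<phi> (curry D2 i)}) (Qfull pX pYX S m n)
      = map_pmf (\<lambda>b. card {i\<in>{..<m}. b i}) (map_pmf (\<lambda>F. \<phi> \<circ> F) (Pi_pmf {..<m} (\<lambda>_. []) (\<lambda>_. R)))"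
    unfolding QE by (simp add: map_pmf_comp)
  also have "map_pmf (\<lambda>F. \<phi> \<circ> F) (Pi_pmf {..<m} (\<lambda>_. []) (\<lambda>_. R)) = Pi_pmf {..<m} (\<phi> (\<lambda>_. [])) (\<lambda>_. map_pmf \<phi> R)"
    by (rule Pi_pmf_map[symmetric]) auto
  also have "map_pmf \<phi> R = bernoulli_pmf p"
    unfolding \<phi>_def R_def p_def using jk jk' ne by (intro bernoulli_mismatch) auto
  also have "map_pmf (\<lambda>b. card {i\<in>{..<m}. b i}) (Pi_pmf {..<m} (\<phi> (\<lambda>_. [])) (\<lambda>_. bernoulli_pmf p)) = binomial_pmf m p"
  proof (rule binomial_pmf_altdef'[symmetric])
    have "p0 pX pYX \<in> {0..1}" "p1 pX pYX \<in> {0..1}" unfolding p0_def p1_def by auto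
    thus "p \<in> {0..1}" unfolding p_def by auto
  qed auto
  finally show ?thesis unfolding p_def orig .
qed

lemma ne_True: "(P \<noteq> True) = (\<not> P)" by simp
lemma ne_False: "(P \<noteq> False) = P" by simp

lemma binom_tail_ge:
  assumes "p \<in> {0..1}" "0 < m" "p \<le> \<tau>" "0 \<le> \<delta>" "\<delta> \<le> \<tau> - p"
  shows "measure_pmf.prob (binomial_pmf m p) {x. \<not> real x < real m * \<tau>} \<le> exp (- 2 * real m * \<delta>\<^sup>2)"
proof -
  have bd: "binomial_distribution p" using assms(1) by (simp add: binomial_distribution_def)
  have "measure_pmf.prob (binomial_pmf m p) {x. \<not> real x < real m * \<tau>}
      \<le> measure_pmf.prob (binomial_pmf m p) {x. p + (\<tau> - p) \<le> real x / real m}"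
    using assms(2) by (intro measure_pmf.finite_measure_mono) (auto simp: field_simps)
  also have "\<dots> \<le> exp (real_of_int (- 2 * int m) * (\<tau> - p)\<^sup>2)"
    using binomial_distribution.prob_ge'[OF bd assms(2), of "\<tau> - p"] assms by simp
  also have "\<dots> \<le> exp (- 2 * real m * \<delta>\<^sup>2)"
    using assms by (auto intro!: mult_left_mono power_mono)
  finally show ?thesis .
qed

lemma binom_tail_le:
  assumes "p \<in> {0..1}" "0 < m" "\<tau> \<le> p" "0 \<le> \<delta>" "\<delta> \<le> p - \<tau>"
  shows "measure_pmf.prob (binomial_pmf m p) {x. real x < real m * \<tau>} \<le> exp (- 2 * real m * \<delta>\<^sup>2)"
proof -
  have bd: "binomial_distribution p" using assms(1) by (simp add: binomial_distribution_def)
  have "measure_pmf.prob (binomial_pmf m p) {x. real x < real m * \<tau>}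
      \<le> measure_pmf.prob (binomial_pmf m p) {x. real x / real m \<le> p - (p - \<tau>)}"
    using assms(2) by (intro measure_pmf.finite_measure_mono) (auto simp: field_simps)
  also have "\<dots> \<le> exp (real_of_int (- 2 * int m) * (p - \<tau>)\<^sup>2)"
    using binomial_distribution.prob_le'[OF bd assms(2), of "p - \<tau>"] assms by simp
  also have "\<dots> \<le> exp (- 2 * real m * \<delta>\<^sup>2)"
    using assms by (auto intro!: mult_left_mono power_mono)
  finally show ?thesis .
qed

lemma event_bound:
  fixes S :: "nat \<Rightarrow> nat" and pX :: "'x pmf" and pYX :: "'x \<Rightarrow> 'y pmf"
  assumes "p1 pX pYX \<le> \<tau>" "\<tau> \<le> p0 pX pYX" "0 < m" "0 \<le> \<delta>" "\<delta> \<le> \<tau> - p1 pX pYX" "\<delta> \<le> p0 pX pYX - \<tau>"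
  shows "measure_pmf.prob (Qfull pX pYX S m n) {D2. c + 1 < num_cols S n \<and>
      ((real (dH m (col n (curry D2) c) (col n (curry D2) (c + 1))) < real m * \<tau>)
        \<noteq> (origin S n c = origin S n (c + 1)))} \<le> exp (- 2 * real m * \<delta>\<^sup>2)"
proof (cases "c + 1 < num_cols S n")
  case False thus ?thesis by simp
next
  case True
  define f where "f = (\<lambda>D2 :: nat \<times> nat \<Rightarrow> 'y list. dH m (col n (curry D2) c) (col n (curry D2) (c + 1)))"
  define same where "same = (origin S n c = origin S n (c + 1))"
  have "measure_pmf.prob (Qfull pX pYX S m n) {D2. c + 1 < num_cols S n \<and>
      ((real (dH m (col n (curry D2) c) (col n (curry D2) (c + 1))) < real m * \<tau>)
        \<noteq> (origin S n c = origin S n (c + 1)))}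
      = measure_pmf.prob (map_pmf f (Qfull pX pYX S m n)) {x. (real x < real m * \<tau>) \<noteq> same}"
    using True by (simp add: f_def same_def vimage_def)
  also have "map_pmf f (Qfull pX pYX S m n) = binomial_pmf m (if same then p1 pX pYX else p0 pX pYX)"
    unfolding f_def same_def by (rule dH_binomial[OF True])
  also have "measure_pmf.prob \<dots> {x. (real x < real m * \<tau>) \<noteq> same} \<le> exp (- 2 * real m * \<delta>\<^sup>2)"
  proof (cases same)
    case True
    have "p1 pX pYX \<in> {0..1}" unfolding p1_def by auto
    thus ?thesis using assms by (simp only: True if_True ne_True) (intro binom_tail_ge, auto)
  next
    case False
    have "p0 pX pYX \<in> {0..1}" unfolding p0_def by auto
    thus ?thesis using assms by (simp only: False if_False ne_False) (intro binom_tail_le, auto)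
  qed
  finally show ?thesis .
qed

lemma S_bound:
  fixes S :: "nat \<Rightarrow> nat" and pX :: "'x pmf" and pYX :: "'x \<Rightarrow> 'y pmf"
  assumes "p1 pX pYX \<le> \<tau>" "\<tau> \<le> p0 pX pYX" "0 < m" "0 \<le> \<delta>" "\<delta> \<le> \<tau> - p1 pX pYX" "\<delta> \<le> p0 pX pYX - \<tau>"
    and Sb: "\<And>j. j < n \<Longrightarrow> S j \<le> smax"
  shows "measure_pmf.prob (Qfull pX pYX S m n) {D2. (S, curry D2) \<in> err_event m n \<tau>}
         \<le> real (n * smax) * exp (- 2 * real m * \<delta>\<^sup>2)"
proof -
  define E where "E = (\<lambda>c. {D2 :: nat \<times> nat \<Rightarrow> 'y list. c + 1 < num_cols S n \<and>
      ((real (dH m (col n (curry D2) c) (col n (curry D2) (c + 1))) < real m * \<tau>)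
        \<noteq> (origin S n c = origin S n (c + 1)))})"
  have nc: "num_cols S n \<le> n * smax"
    unfolding num_cols_def using sum_bounded_above[of "{..<n}" S smax] Sb by simp
  have sub: "{D2. (S, curry D2) \<in> err_event m n \<tau>} \<subseteq> (\<Union>c\<in>{..<n * smax}. E c)"
  proof
    fix D2 :: "nat \<times> nat \<Rightarrow> 'y list" assume "D2 \<in> {D2. (S, curry D2) \<in> err_event m n \<tau>}"
    then obtain c where c: "c + 1 < num_cols S n"
      "(real (dH m (col n (curry D2) c) (col n (curry D2) (c + 1))) < real m * \<tau>) \<noteq> (origin S n c = origin S n (c + 1))"
      unfolding err_event_def by auto
    hence "c < n * smax" using nc by simp
    thus "D2 \<in> (\<Union>c\<in>{..<n * smax}. E c)" using c unfolding E_def by blast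
  qed
  have "measure_pmf.prob (Qfull pX pYX S m n) {D2. (S, curry D2) \<in> err_event m n \<tau>}
      \<le> measure_pmf.prob (Qfull pX pYX S m n) (\<Union>c\<in>{..<n * smax}. E c)"
    using sub by (intro measure_pmf.finite_measure_mono) auto
  also have "\<dots> \<le> (\<Sum>c\<in>{..<n * smax}. measure_pmf.prob (Qfull pX pYX S m n) (E c))"
    by (intro measure_pmf.finite_measure_subadditive_finite) auto
  also have "\<dots> \<le> (\<Sum>c\<in>{..<n * smax}. exp (- 2 * real m * \<delta>\<^sup>2))"
    unfolding E_def by (intro sum_mono event_bound assms)
  also have "\<dots> = real (n * smax) * exp (- 2 * real m * \<delta>\<^sup>2)" by simp
  finally show ?thesis .
qed

lemma db_bound:
  fixes pX :: "'x pmf" and pYX :: "'x \<Rightarrow> 'y pmf"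
  assumes "p1 pX pYX \<le> \<tau>" "\<tau> \<le> p0 pX pYX" "0 < m" "0 \<le> \<delta>" "\<delta> \<le> \<tau> - p1 pX pYX" "\<delta> \<le> p0 pX pYX - \<tau>"
    and pS: "set_pmf pS \<subseteq> {0..smax}"
  shows "measure_pmf.prob (db_dist pX pYX pS m n) (err_event m n \<tau>)
         \<le> real (n * smax) * exp (- 2 * real m * \<delta>\<^sup>2)"
  unfolding db_dist_alt
proof (rule prob_bind_le)
  fix S assume S: "S \<in> set_pmf (Pi_pmf {..<n} 0 (\<lambda>_. pS))"
  have Sb: "S j \<le> smax" if "j < n" for j
  proof -
    have "S j \<in> set_pmf pS" using S that by (subst (asm) set_Pi_pmf) (auto simp: PiE_dflt_def)
    thus ?thesis using pS by auto
  qed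
  have "measure_pmf.prob (map_pmf (\<lambda>D2. (S, curry D2)) (Qfull pX pYX S m n)) (err_event m n \<tau>)
      = measure_pmf.prob (Qfull pX pYX S m n) {D2. (S, curry D2) \<in> err_event m n \<tau>}"
    by (simp add: vimage_def)
  also have "\<dots> \<le> real (n * smax) * exp (- 2 * real m * \<delta>\<^sup>2)"
    by (rule S_bound[OF assms(1-6) Sb])
  finally show "measure_pmf.prob (map_pmf (\<lambda>D2. (S, curry D2)) (Qfull pX pYX S m n)) (err_event m n \<tau>)
      \<le> real (n * smax) * exp (- 2 * real m * \<delta>\<^sup>2)" .
qed simp

lemma exp_neg_le_inv: "0 < x \<Longrightarrow> exp (- x) \<le> 1 / x" for x :: real
proof -
  assume x: "0 < x"
  have "x \<le> exp x" using exp_ge_add_one_self[of x] by linarith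
  hence "inverse (exp x) \<le> inverse x" using x by (intro le_imp_inverse_le) auto
  thus ?thesis by (simp add: exp_minus divide_inverse)
qed

lemma final_arith:
  fixes P M R \<delta> :: real and n :: nat and smax :: nat
  assumes P: "P \<le> real (n * smax) * exp (- 2 * M * \<delta>\<^sup>2)"
    and n: "0 < n" and R: "0 < R" and d: "0 < \<delta>"
    and M: "R\<^sup>2 * (real n)\<^sup>2 / 8 \<le> M"
  shows "P \<le> (4 * real smax / (\<delta>\<^sup>2 * R\<^sup>2)) / real n"
proof -
  have pos: "0 < R\<^sup>2 * (real n)\<^sup>2 / 8" using n R by simp
  hence Mpos: "0 < M" using M by linarith
  have "exp (- 2 * M * \<delta>\<^sup>2) \<le> 1 / (2 * M * \<delta>\<^sup>2)"
    using exp_neg_le_inv[of "2 * M * \<delta>\<^sup>2"] Mpos d by simp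
  also have "\<dots> \<le> 1 / (2 * (R\<^sup>2 * (real n)\<^sup>2 / 8) * \<delta>\<^sup>2)"
    using M pos d by (intro divide_left_mono mult_right_mono mult_left_mono mult_pos_pos) auto
  finally have e: "exp (- 2 * M * \<delta>\<^sup>2) \<le> 1 / (2 * (R\<^sup>2 * (real n)\<^sup>2 / 8) * \<delta>\<^sup>2)" .
  have "P \<le> real (n * smax) * (1 / (2 * (R\<^sup>2 * (real n)\<^sup>2 / 8) * \<delta>\<^sup>2))"
    using P e by (meson mult_left_mono of_nat_0_le_iff order_trans)
  also have "\<dots> = (4 * real smax / (\<delta>\<^sup>2 * R\<^sup>2)) / real n"
    using n R d by (simp add: field_simps power2_eq_square)
  finally show ?thesis .
qed

theorem lemma1:
  fixes pX :: "'x::finite pmf" and pYX :: "'x \<Rightarrow> 'y::finite pmf"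
    and pS :: "nat pmf" and smax :: nat and m :: "nat \<Rightarrow> nat" and R :: real
  assumes "set_pmf pS \<subseteq> {0..smax}"
    and "joint_pmf pX pYX \<noteq> pair_pmf pX (out_pmf pX pYX)"
    and "(\<lambda>n. ln (real (m n)) / real n) \<longlonglongrightarrow> R"
    and "R > 0"
  shows "p1 pX pYX < p0 pX pYX \<and>
    (\<forall>\<tau>. p1 pX pYX < \<tau> \<and> \<tau> < p0 pX pYX \<longrightarrow>
      (\<lambda>n. measure_pmf.prob (db_dist pX pYX pS (m n) n) (err_event (m n) n \<tau>))
        \<longlonglongrightarrow> 0)"
proof (intro conjI allI impI)
  show "p1 pX pYX < p0 pX pYX" using p1_lt_p0[OF assms(2)] .
  fix \<tau> assume \<tau>: "p1 pX pYX < \<tau> \<and> \<tau> < p0 pX pYX"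
  define \<delta> where "\<delta> = min (\<tau> - p1 pX pYX) (p0 pX pYX - \<tau>)"
  have d: "0 < \<delta>" using \<tau> unfolding \<delta>_def by auto
  define C where "C = 4 * real smax / (\<delta>\<^sup>2 * R\<^sup>2)"
  have ev1: "eventually (\<lambda>n. R / 2 < ln (real (m n)) / real n) sequentially"
    using order_tendstoD(1)[OF assms(3), of "R / 2"] assms(4) by simp
  have ev: "eventually (\<lambda>n. measure_pmf.prob (db_dist pX pYX pS (m n) n) (err_event (m n) n \<tau>) \<le> C / real n) sequentially"
    using ev1 eventually_gt_at_top[of 0]
  proof eventually_elim
    case (elim n)
    have n: "0 < n" using elim by simp
    have mpos: "0 < m n"
    proof (rule ccontr)
      assume "\<not> 0 < m n" hence "m n = 0" by simp
      thus False using elim(1) assms(4) by simp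
    qed
    have "R / 2 * real n < ln (real (m n))" using elim(1) n by (simp add: field_simps)
    hence "exp (R / 2 * real n) < exp (ln (real (m n)))" by (simp only: exp_less_cancel_iff)
    also have "exp (ln (real (m n))) = real (m n)" using mpos by simp
    finally have "exp (R / 2 * real n) < real (m n)" .
    moreover have "(R / 2 * real n)\<^sup>2 / 2 \<le> exp (R / 2 * real n)"
    proof -
      have y0: "0 \<le> R / 2 * real n" using assms(4) by simp
      show ?thesis using exp_lower_Taylor_quadratic[OF y0] y0 by linarith
    qed
    ultimately have M: "R\<^sup>2 * (real n)\<^sup>2 / 8 \<le> real (m n)"
      by (simp add: power_mult_distrib power_divide)
    have P: "measure_pmf.prob (db_dist pX pYX pS (m n) n) (err_event (m n) n \<tau>)
        \<le> real (n * smax) * exp (- 2 * real (m n) * \<delta>\<^sup>2)"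
      using \<tau> d mpos assms(1) unfolding \<delta>_def by (intro db_bound) auto
    show ?case unfolding C_def using final_arith[OF P n assms(4) d M] .
  qed
  have ev0: "eventually (\<lambda>n. 0 \<le> measure_pmf.prob (db_dist pX pYX pS (m n) n) (err_event (m n) n \<tau>)) sequentially"
    by simp
  show "(\<lambda>n. measure_pmf.prob (db_dist pX pYX pS (m n) n) (err_event (m n) n \<tau>)) \<longlonglongrightarrow> 0"
    by (rule tendsto_sandwich[OF ev0 ev tendsto_const lim_const_over_n])
qed

end
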